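(* Let $n\geq 3$. The group $S_1\times S_{n-1}$ acts freely and transitively on $C_n$.
   Context: $\overline{\Pi}_n$ is the poset of set partitions of $[n]$ ordered by refinement (finer is smaller), with minimum and maximum removed; $\Delta(\overline{\Pi}_n)$ is its order complex (simplices are nonempty chains), with the natural action of $S_n$ induced from its action on $[n]$. $S_1\times S_{n-1}=\{\sigma\in S_n\mid\sigma(1)=1\}$. $A$ is the set of partitions in $\overline{\Pi}_n$ all of whose blocks not containing $1$ are singletons; $C_n$ is the set of $(n-3)$-dimensional simplices (chains of $n-2$ elements) all of whose vertices lie in $A$. *)

theory Defs
  imports "HOL-Library.Disjoint_Sets" "HOL-Combinatorics.Permutations"
begin

definition set_partitions :: "nat \<Rightarrow> nat set set set" where
  "set_partitions n = {P. partition_on {1..n} P}"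

definition refines :: "nat set set \<Rightarrow> nat set set \<Rightarrow> bool" where
  "refines P Q \<longleftrightarrow> (\<forall>B\<in>P. \<exists>B'\<in>Q. B \<subseteq> B')"

definition Pi_bar :: "nat \<Rightarrow> nat set set set" where
  "Pi_bar n = set_partitions n - {(\<lambda>i. {i}) ` {1..n}, {{1..n}}}"

text \<open>Simplices of the order complex: nonempty (finite) chains.\<close>
definition is_chain :: "nat \<Rightarrow> nat set set set \<Rightarrow> bool" where
  "is_chain n c \<longleftrightarrow> c \<noteq> {} \<and> finite c \<and> c \<subseteq> Pi_bar n \<and>
     (\<forall>P\<in>c. \<forall>Q\<in>c. refines P Q \<or> refines Q P)"

definition A_set :: "nat \<Rightarrow> nat set set set" where
  "A_set n = {P \<in> Pi_bar n. \<forall>B\<in>P. 1 \<notin> B \<longrightarrow> card B = 1}"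

text \<open>C_n: (n-3)-dimensional simplices (chains of n-2 elements) with all vertices in A.\<close>
definition C_set :: "nat \<Rightarrow> nat set set set set" where
  "C_set n = {c. is_chain n c \<and> card c = n - 2 \<and> c \<subseteq> A_set n}"

definition act_part :: "(nat \<Rightarrow> nat) \<Rightarrow> nat set set \<Rightarrow> nat set set" where
  "act_part \<sigma> P = (\<lambda>B. \<sigma> ` B) ` P"

definition act_chain :: "(nat \<Rightarrow> nat) \<Rightarrow> nat set set set \<Rightarrow> nat set set set" where
  "act_chain \<sigma> c = act_part \<sigma> ` c"

text \<open>S_1 x S_{n-1}: permutations of {1..n} fixing 1.\<close>
definition stab1 :: "nat \<Rightarrow> (nat \<Rightarrow> nat) set" where
  "stab1 n = {\<sigma>. \<sigma> permutes {1..n} \<and> \<sigma> 1 = 1}"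

end

theory Submission
  imports Defs
begin


definition part :: "nat \<Rightarrow> nat set \<Rightarrow> nat set set" where
  "part n B = insert B ((\<lambda>i. {i}) ` ({1..n} - B))"

definition blk :: "nat set set \<Rightarrow> nat set" where
  "blk P = (THE B. B \<in> P \<and> 1 \<in> B)"

lemma blk_part: assumes "1 \<in> B" shows "blk (part n B) = B"
  unfolding blk_def
proof (rule the_equality)
  show "B \<in> part n B \<and> 1 \<in> B" using assms by (simp add: part_def)
next
  fix C assume "C \<in> part n B \<and> 1 \<in> C"
  then show "C = B" using assms by (auto simp: part_def)
qed

lemma part_inj: "1 \<in> B \<Longrightarrow> 1 \<in> B' \<Longrightarrow> part n B = part n B' \<Longrightarrow> B = B'"
  by (metis blk_part)

lemma refines_part:
  assumes "1 \<in> B" "1 \<in> B'"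
  shows "refines (part n B) (part n B') \<longleftrightarrow> B \<subseteq> B'"
proof
  assume "refines (part n B) (part n B')"
  then obtain C where C: "C \<in> part n B'" "B \<subseteq> C" unfolding refines_def part_def by auto
  then have "1 \<in> C" using assms by auto
  with C assms show "B \<subseteq> B'" by (auto simp: part_def)
next
  assume "B \<subseteq> B'"
  then show "refines (part n B) (part n B')"
    unfolding refines_def part_def by auto
qed

lemma part_in_A:
  assumes "1 \<in> B" "B \<subseteq> {1..n}" "card B \<ge> 2" "B \<noteq> {1..n}"
  shows "part n B \<in> A_set n"
proof -
  have fin: "finite B" using assms(2) finite_subset by blast
  have "partition_on {1..n} (part n B)"
    unfolding partition_on_def
  proof (intro conjI)
    show "\<Union>(part n B) = {1..n}" using assms(1,2) unfolding part_def by auto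
    show "disjoint (part n B)" unfolding disjoint_def pairwise_def disjnt_def part_def by auto
    show "{} \<notin> part n B" using assms(1) unfolding part_def by auto
  qed
  moreover have "part n B \<noteq> (\<lambda>i. {i}) ` {1..n}"
  proof
    assume "part n B = (\<lambda>i. {i}) ` {1..n}"
    then have "B \<in> (\<lambda>i. {i}) ` {1..n}" by (metis insertI1 part_def)
    then show False using assms(3) by auto
  qed
  moreover have "part n B \<noteq> {{1..n}}"
    using assms(4) by (auto simp: part_def)
  moreover have "\<forall>C\<in>part n B. 1 \<notin> C \<longrightarrow> card C = 1"
    using assms(1) by (auto simp: part_def)
  ultimately show ?thesis
    unfolding A_set_def Pi_bar_def set_partitions_def by blast
qed

lemma A_part:
  assumes "P \<in> A_set n" "n \<ge> 1"
  shows "1 \<in> blk P \<and> blk P \<subseteq> {1..n} \<and> card (blk P) \<ge> 2 \<and> blk P \<noteq> {1..n} \<and> P = part n (blk P)"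
proof -
  have po: "partition_on {1..n} P" and nmin: "P \<noteq> (\<lambda>i. {i}) ` {1..n}" and nmax: "P \<noteq> {{1..n}}"
    and sing: "\<forall>C\<in>P. 1 \<notin> C \<longrightarrow> card C = 1"
    using assms(1) unfolding A_set_def Pi_bar_def set_partitions_def by auto
  have U: "\<Union>P = {1..n}" and dj: "disjoint P" and ne: "{} \<notin> P" using po unfolding partition_on_def by auto
  obtain B where B: "B \<in> P" "1 \<in> B" using U assms(2) by (metis UnionE atLeastAtMost_iff order_refl)
  have uniq: "C = B" if "C \<in> P" "1 \<in> C" for C
  proof (rule ccontr)
    assume "C \<noteq> B"
    then have "C \<inter> B = {}" using disjointD[OF dj that(1) B(1)] by simp
    then show False using that(2) B(2) by blast
  qed
  have bB: "blk P = B" unfolding blk_def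
    by (rule the_equality) (use B uniq in blast)+
  have Bsub: "B \<subseteq> {1..n}" using U B by auto
  have Peq: "P = part n B"
  proof
    show "P \<subseteq> part n B"
    proof
      fix C assume C: "C \<in> P"
      show "C \<in> part n B"
      proof (cases "1 \<in> C")
        case True then show ?thesis using uniq[OF C True] by (simp add: part_def)
      next
        case False
        then have "card C = 1" using sing C by auto
        then obtain i where i: "C = {i}" by (auto simp: card_Suc_eq)
        have "C \<noteq> B" using False B by auto
        then have "i \<notin> B" using disjointD[OF dj C B(1)] i by auto
        moreover have "i \<in> {1..n}" using U C i by auto
        ultimately show ?thesis using i by (auto simp: part_def)
      qed
    qed
  next
    show "part n B \<subseteq> P"
    proof
      fix C assume "C \<in> part n B"
      then consider "C = B" | i where "i \<in> {1..n}" "i \<notin> B" "C = {i}" by (auto simp: part_def)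
      then show "C \<in> P"
      proof cases
        case 1 then show ?thesis using B by simp
      next
        case 2
        then obtain D where D: "D \<in> P" "i \<in> D" using U 2(1) by (metis UnionE)
        then have "1 \<notin> D" using uniq[OF D(1)] 2 by blast
        then have "card D = 1" using sing D by auto
        then have "D = {i}" using D by (auto simp: card_Suc_eq)
        then show ?thesis using D 2 by simp
      qed
    qed
  qed
  have "B \<noteq> {1..n}" using nmax Peq by (auto simp: part_def)
  moreover have "card B \<ge> 2"
  proof (rule ccontr)
    assume "\<not> card B \<ge> 2"
    moreover have "finite B" using Bsub finite_subset by blast
    moreover have "B \<noteq> {}" using B by auto
    ultimately have "card B = 1" by (metis card_gt_0_iff One_nat_def Suc_leI le_antisym not_le numeral_2_eq_2)
    then have "B = {1}" using B by (auto simp: card_Suc_eq)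
    then have "P = insert {1} ((\<lambda>i. {i}) ` ({1..n} - {1}))" using Peq unfolding part_def by simp
    also have "\<dots> = (\<lambda>i. {i}) ` (insert 1 ({1..n} - {1}))" by (simp only: image_insert)
    also have "insert 1 ({1..n} - {1}) = {1..n}" using assms(2) by auto
    finally have "P = (\<lambda>i. {i}) ` {1..n}" .
    then show False using nmin by simp
  qed
  ultimately show ?thesis using bB B Bsub Peq by auto
qed



definition flag :: "nat \<Rightarrow> nat set set \<Rightarrow> bool" where
  "flag n S \<longleftrightarrow> finite S \<and> (\<forall>B\<in>S. 1 \<in> B \<and> B \<subseteq> {1..n}) \<and>
     (\<forall>B\<in>S. \<forall>B'\<in>S. B \<subseteq> B' \<or> B' \<subseteq> B) \<and> inj_on card S \<and> card ` S = {2..n-1}"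

definition pos :: "nat set set \<Rightarrow> nat \<Rightarrow> nat" where
  "pos S i = card {B\<in>S. i \<notin> B}"

lemma flag_card_S: "flag n S \<Longrightarrow> card S = n - 2"
proof -
  assume "flag n S"
  then have i: "inj_on card S" and e: "card ` S = {2..n-1}" unfolding flag_def by auto
  have "card S = card (card ` S)" using card_image[OF i] by simp
  also have "\<dots> = n - 2" using e by simp
  finally show "card S = n - 2" .
qed

lemma flag_card_lt:
  assumes "flag n S" "k \<le> n"
  shows "card {B\<in>S. card B < k} = k - 2"
proof -
  have i: "inj_on card S" and e: "card ` S = {2..n-1}" using assms(1) unfolding flag_def by auto
  have inj: "inj_on card {B\<in>S. card B < k}" by (rule inj_on_subset[OF i]) blast
  have "card ` {B\<in>S. card B < k} = card ` S \<inter> {..<k}" by blast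
  also have "\<dots> = {2..n-1} \<inter> {..<k}" using e by simp
  also have "\<dots> = {2..<k}" using assms(2) by auto
  finally show ?thesis using card_image[OF inj] by simp
qed

lemma flag_finB: "flag n S \<Longrightarrow> B \<in> S \<Longrightarrow> finite B"
  unfolding flag_def by (meson finite_atLeastAtMost finite_subset)

lemma flag_cardB: "flag n S \<Longrightarrow> B \<in> S \<Longrightarrow> 2 \<le> card B \<and> card B \<le> n - 1"
  unfolding flag_def by (metis atLeastAtMost_iff image_eqI)

lemma flag_mem:
  assumes fl: "flag n S" and B: "B \<in> S" and i: "i \<in> {2..n}"
  shows "i \<in> B \<longleftrightarrow> pos S i < card B - 1"
proof
  assume iB: "i \<in> B"
  have "{B'\<in>S. i \<notin> B'} \<subseteq> {B'\<in>S. card B' < card B}"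
  proof
    fix B' assume B': "B' \<in> {B'\<in>S. i \<notin> B'}"
    then have "B' \<subseteq> B" "B' \<noteq> B" using fl B iB unfolding flag_def by blast+
    then have "card B' < card B" using flag_finB[OF fl B] by (meson psubsetI psubset_card_mono)
    then show "B' \<in> {B'\<in>S. card B' < card B}" using B' by simp
  qed
  then have "pos S i \<le> card {B'\<in>S. card B' < card B}" unfolding pos_def
    by (rule card_mono[rotated]) (use fl in \<open>simp add: flag_def\<close>)
  also have "\<dots> = card B - 2" using flag_cardB[OF fl B] by (intro flag_card_lt[OF fl]) linarith
  finally show "pos S i < card B - 1" using flag_cardB[OF fl B] by linarith
next
  assume lt: "pos S i < card B - 1"
  show "i \<in> B"
  proof (rule ccontr)
    assume iB: "i \<notin> B"
    have "{B'\<in>S. card B' < card B + 1} \<subseteq> {B'\<in>S. i \<notin> B'}"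
    proof
      fix B' assume B': "B' \<in> {B'\<in>S. card B' < card B + 1}"
      then have "B' \<subseteq> B \<or> B \<subseteq> B'" using fl B unfolding flag_def by blast
      then have "B' \<subseteq> B"
      proof
        assume "B \<subseteq> B'"
        moreover have "finite B'" using flag_finB[OF fl] B' by blast
        ultimately have "B = B'" using B' by (simp add: card_seteq)
        then show "B' \<subseteq> B" by simp
      qed
      then show "B' \<in> {B'\<in>S. i \<notin> B'}" using B' iB by auto
    qed
    then have "card {B'\<in>S. card B' < card B + 1} \<le> pos S i" unfolding pos_def
      by (rule card_mono[rotated]) (use fl in \<open>simp add: flag_def\<close>)
    moreover have "card {B'\<in>S. card B' < card B + 1} = card B - 1"
    proof -
      have "card B + 1 \<le> n" using flag_cardB[OF fl B] by linarith
      then show ?thesis using flag_card_lt[OF fl, of "card B + 1"] by simp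
    qed
    ultimately show False using lt by simp
  qed
qed

lemma flag_pos_le: "flag n S \<Longrightarrow> pos S i \<le> n - 2"
  unfolding pos_def using flag_card_S
  by (metis (no_types, lifting) card_mono flag_def mem_Collect_eq subsetI)

lemma flag_exists: "flag n S \<Longrightarrow> k \<in> {2..n-1} \<Longrightarrow> \<exists>B\<in>S. card B = k"
  unfolding flag_def by (metis imageE)

lemma flag_block:
  assumes fl: "flag n S" and B: "B \<in> S"
  shows "B = insert 1 {x\<in>{2..n}. pos S x < card B - 1}"
proof -
  have "1 \<in> B" "B \<subseteq> {1..n}" using fl B unfolding flag_def by auto
  then show ?thesis using flag_mem[OF fl B] by (auto simp: Suc_le_eq)
qed

lemma flag_count:
  assumes fl: "flag n S" and w: "w \<le> n - 1" and n: "n \<ge> 2"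
  shows "card {x\<in>{2..n}. pos S x < w} = w"
proof (cases "w = n - 1")
  case True
  have "pos S x < w" for x
  proof -
    have "pos S x \<le> n - 2" by (rule flag_pos_le[OF fl])
    then show ?thesis using True n by linarith
  qed
  then have "{x\<in>{2..n}. pos S x < w} = {2..n}" by auto
  then show ?thesis using True n by simp
next
  case False
  show ?thesis
  proof (cases "w = 0")
    case True then show ?thesis by simp
  next
    case w0: False
    then obtain B where B: "B \<in> S" "card B = w + 1" using flag_exists[OF fl, of "w+1"] w False by auto
    have "{x\<in>{2..n}. pos S x < w} = B - {1}" using flag_block[OF fl B(1)] B(2) by auto
    then show ?thesis using B flag_finB[OF fl B(1)] fl unfolding flag_def by auto
  qed
qed

lemma flag_inj:
  assumes fl: "flag n S" and n: "n \<ge> 2"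
  shows "inj_on (pos S) {2..n}"
proof (rule inj_onI, rule ccontr)
  fix i j assume i: "i \<in> {2..n}" and j: "j \<in> {2..n}" and eq: "pos S i = pos S j" and ne: "i \<noteq> j"
  define v where "v = pos S i"
  have v: "v + 1 \<le> n - 1" using flag_pos_le[OF fl, of i] n unfolding v_def by simp
  define X where "X = {x\<in>{2..n}. pos S x < v + 1}"
  define Y where "Y = {x\<in>{2..n}. pos S x < v}"
  have "Y \<subseteq> X" unfolding X_def Y_def by auto
  moreover have "{i, j} \<subseteq> X - Y" using i j eq unfolding X_def Y_def v_def by auto
  moreover have "finite X" unfolding X_def by simp
  ultimately have "card Y + 2 \<le> card X"
    by (metis (no_types, lifting) card_2_iff card_Diff_subset card_mono finite_Diff finite_subset ne add.commute le_diff_conv2)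
  moreover have "card X = v + 1" unfolding X_def using flag_count[OF fl v n] .
  moreover have "card Y = v" unfolding Y_def using flag_count[OF fl _ n, of v] v by simp
  ultimately show False by simp
qed

lemma flag_bij:
  assumes fl: "flag n S" and n: "n \<ge> 2"
  shows "bij_betw (pos S) {2..n} {0..n-2}"
proof -
  have inj: "inj_on (pos S) {2..n}" using flag_inj[OF fl n] .
  have sub: "pos S ` {2..n} \<subseteq> {0..n-2}" using flag_pos_le[OF fl] by auto
  have "card (pos S ` {2..n}) = card {0..n-2}" using card_image[OF inj] n by simp
  then have "pos S ` {2..n} = {0..n-2}" using sub by (simp add: card_subset_eq)
  then show ?thesis using inj unfolding bij_betw_def by simp
qed



lemma C_flag:
  assumes n: "n \<ge> 3" and c: "c \<in> C_set n"
  shows "flag n (blk ` c) \<and> c = part n ` (blk ` c)"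
proof -
  have ch: "is_chain n c" and cc: "card c = n - 2" and cA: "c \<subseteq> A_set n"
    using c unfolding C_set_def by auto
  have fc: "finite c" and cmp: "\<forall>P\<in>c. \<forall>Q\<in>c. refines P Q \<or> refines Q P" using ch unfolding is_chain_def by auto
  have pr: "1 \<in> blk P \<and> blk P \<subseteq> {1..n} \<and> card (blk P) \<ge> 2 \<and> blk P \<noteq> {1..n} \<and> P = part n (blk P)"
    if "P \<in> c" for P using A_part[of P n] cA that n by auto
  define S where "S = blk ` c"
  have ceq: "c = part n ` S"
  proof
    show "c \<subseteq> part n ` S"
    proof
      fix P assume "P \<in> c"
      then have "P = part n (blk P)" "blk P \<in> S" using pr unfolding S_def by auto
      then show "P \<in> part n ` S" by blast
    qed
    show "part n ` S \<subseteq> c" unfolding S_def using pr by auto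
  qed
  have S1: "\<forall>B\<in>S. 1 \<in> B \<and> B \<subseteq> {1..n}" unfolding S_def using pr by auto
  have Scmp: "\<forall>B\<in>S. \<forall>B'\<in>S. B \<subseteq> B' \<or> B' \<subseteq> B"
  proof (intro ballI)
    fix B B' assume "B \<in> S" "B' \<in> S"
    then obtain P Q where PQ: "P \<in> c" "Q \<in> c" "B = blk P" "B' = blk Q" unfolding S_def by auto
    then have "refines P Q \<or> refines Q P" using cmp by auto
    then show "B \<subseteq> B' \<or> B' \<subseteq> B" using pr[OF PQ(1)] pr[OF PQ(2)] PQ(3,4) refines_part
      by metis
  qed
  have finB: "finite B" if "B \<in> S" for B using S1 that finite_subset by blast
  have injS: "inj_on card S"
  proof (rule inj_onI)
    fix B B' assume B: "B \<in> S" "B' \<in> S" "card B = card B'"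
    show "B = B'" using Scmp B finB by (metis card_subset_eq)
  qed
  have sub: "card ` S \<subseteq> {2..n-1}"
  proof
    fix k assume "k \<in> card ` S"
    then obtain P where P: "P \<in> c" "k = card (blk P)" unfolding S_def by auto
    have "blk P \<subset> {1..n}" using pr[OF P(1)] by auto
    then have "card (blk P) < n" using psubset_card_mono[of "{1..n}" "blk P"] by simp
    then show "k \<in> {2..n-1}" using pr[OF P(1)] P(2) by auto
  qed
  have injc: "inj_on blk c" using pr by (metis inj_onI)
  have "card (card ` S) = card S" using card_image[OF injS] .
  also have "\<dots> = card c" unfolding S_def using card_image[OF injc] .
  also have "\<dots> = card {2..n-1}" using cc n by simp
  finally have "card ` S = {2..n-1}" using sub by (simp add: card_subset_eq)
  moreover have "finite S" unfolding S_def using fc by simp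
  ultimately have "flag n S" unfolding flag_def using S1 Scmp injS by blast
  then show ?thesis using ceq unfolding S_def by simp
qed

lemma flag_C:
  assumes n: "n \<ge> 3" and fl: "flag n S"
  shows "part n ` S \<in> C_set n"
proof -
  have S1: "\<forall>B\<in>S. 1 \<in> B \<and> B \<subseteq> {1..n}" and fS: "finite S"
    and Scmp: "\<forall>B\<in>S. \<forall>B'\<in>S. B \<subseteq> B' \<or> B' \<subseteq> B"
    and cS: "card ` S = {2..n-1}" using fl unfolding flag_def by auto
  have inA: "part n B \<in> A_set n" if "B \<in> S" for B
  proof (rule part_in_A)
    show "1 \<in> B" "B \<subseteq> {1..n}" using S1 that by auto
    show "2 \<le> card B" using flag_cardB[OF fl that] by simp
    show "B \<noteq> {1..n}" using flag_cardB[OF fl that] n by auto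
  qed
  have AP: "A_set n \<subseteq> Pi_bar n" unfolding A_set_def by auto
  have ne: "S \<noteq> {}" using cS n by auto
  have cmp: "\<forall>P\<in>part n ` S. \<forall>Q\<in>part n ` S. refines P Q \<or> refines Q P"
  proof (intro ballI)
    fix P Q assume "P \<in> part n ` S" "Q \<in> part n ` S"
    then obtain B B' where B: "B \<in> S" "B' \<in> S" "P = part n B" "Q = part n B'" by auto
    then have "B \<subseteq> B' \<or> B' \<subseteq> B" "1 \<in> B" "1 \<in> B'" using Scmp S1 by auto
    then show "refines P Q \<or> refines Q P" using B(3,4) refines_part by metis
  qed
  have inj: "inj_on (part n) S" using S1 part_inj by (metis inj_onI)
  have "card (part n ` S) = n - 2" using card_image[OF inj] flag_card_S[OF fl] by simp
  moreover have "is_chain n (part n ` S)" unfolding is_chain_def using ne fS cmp inA AP by blast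
  ultimately show ?thesis unfolding C_set_def using inA by blast
qed

lemma act_part_part:
  assumes p: "\<sigma> permutes {1..n}" and B: "B \<subseteq> {1..n}"
  shows "act_part \<sigma> (part n B) = part n (\<sigma> ` B)"
proof -
  have inj: "inj \<sigma>" using p by (rule permutes_inj)
  have "\<sigma> ` ({1..n} - B) = \<sigma> ` {1..n} - \<sigma> ` B" using inj by (simp add: image_set_diff)
  also have "\<dots> = {1..n} - \<sigma> ` B" using permutes_image[OF p] by simp
  finally have e: "\<sigma> ` ({1..n} - B) = {1..n} - \<sigma> ` B" .
  have "act_part \<sigma> (part n B) = insert (\<sigma> ` B) ((\<lambda>i. {i}) ` (\<sigma> ` ({1..n} - B)))"
    unfolding act_part_def part_def by (simp add: image_image)
  then show ?thesis using e unfolding part_def by simp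
qed

lemma flag_image:
  assumes p: "\<sigma> permutes {1..n}" and s1: "\<sigma> 1 = 1" and fl: "flag n S"
  shows "flag n ((\<lambda>B. \<sigma> ` B) ` S)"
proof -
  have inj: "inj \<sigma>" using p by (rule permutes_inj)
  have cd: "card (\<sigma> ` B) = card B" for B using inj by (simp add: card_image inj_on_subset)
  have S1: "\<forall>B\<in>S. 1 \<in> B \<and> B \<subseteq> {1..n}" and fS: "finite S"
    and Scmp: "\<forall>B\<in>S. \<forall>B'\<in>S. B \<subseteq> B' \<or> B' \<subseteq> B" and injS: "inj_on card S"
    and cS: "card ` S = {2..n-1}" using fl unfolding flag_def by auto
  let ?T = "(\<lambda>B. \<sigma> ` B) ` S"
  have "\<forall>B\<in>?T. 1 \<in> B \<and> B \<subseteq> {1..n}"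
  proof
    fix C assume "C \<in> ?T"
    then obtain B where B: "B \<in> S" "C = \<sigma> ` B" by auto
    have "1 \<in> C" using B S1 s1 by (metis imageI)
    moreover have "C \<subseteq> {1..n}" using B S1 permutes_image[OF p] by (metis image_mono)
    ultimately show "1 \<in> C \<and> C \<subseteq> {1..n}" by simp
  qed
  moreover have "\<forall>B\<in>?T. \<forall>B'\<in>?T. B \<subseteq> B' \<or> B' \<subseteq> B"
  proof (intro ballI)
    fix C C' assume "C \<in> ?T" "C' \<in> ?T"
    then obtain B B' where B: "B \<in> S" "B' \<in> S" "C = \<sigma> ` B" "C' = \<sigma> ` B'" by auto
    then have "B \<subseteq> B' \<or> B' \<subseteq> B" using Scmp by blast
    then show "C \<subseteq> C' \<or> C' \<subseteq> C" using B(3,4) by (metis image_mono)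
  qed
  moreover have "inj_on card ?T"
  proof (rule inj_onI)
    fix C C' assume "C \<in> ?T" "C' \<in> ?T" "card C = card C'"
    then obtain B B' where "B \<in> S" "B' \<in> S" "C = \<sigma> ` B" "C' = \<sigma> ` B'" "card B = card B'"
      using cd by auto
    then show "C = C'" using injS by (metis inj_onD)
  qed
  moreover have "card ` ?T = {2..n-1}" using cS cd by (simp add: image_image)
  ultimately show ?thesis unfolding flag_def using fS by blast
qed



lemma trans_flag:
  assumes n: "n \<ge> 3" and fc: "flag n Sc" and fd: "flag n Sd"
  shows "\<exists>\<sigma>. \<sigma> permutes {1..n} \<and> \<sigma> 1 = 1 \<and> (\<lambda>B. \<sigma> ` B) ` Sc = Sd"
proof -
  have n2: "n \<ge> 2" using n by simp
  have bc: "bij_betw (pos Sc) {2..n} {0..n-2}" using flag_bij[OF fc n2] .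
  have bd: "bij_betw (pos Sd) {2..n} {0..n-2}" using flag_bij[OF fd n2] .
  have bdi: "bij_betw (inv_into {2..n} (pos Sd)) {0..n-2} {2..n}" using bij_betw_inv_into[OF bd] .
  define \<sigma> where "\<sigma> x = (if x \<in> {2..n} then inv_into {2..n} (pos Sd) (pos Sc x) else x)" for x
  have b1: "bij_betw (inv_into {2..n} (pos Sd) \<circ> pos Sc) {2..n} {2..n}"
    using bij_betw_trans[OF bc bdi] .
  have b2: "bij_betw \<sigma> {2..n} {2..n}"
    using b1 by (rule bij_betw_cong[THEN iffD1, rotated]) (simp add: \<sigma>_def)
  have p2: "\<sigma> permutes {2..n}" by (rule bij_imp_permutes[OF b2]) (auto simp add: \<sigma>_def)
  have p: "\<sigma> permutes {1..n}" by (rule permutes_subset[OF p2]) auto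
  have s1: "\<sigma> 1 = 1" by (simp add: \<sigma>_def)
  have key: "pos Sd (\<sigma> x) = pos Sc x" if "x \<in> {2..n}" for x
  proof -
    have "pos Sc x \<in> pos Sd ` {2..n}" using bc bd that unfolding bij_betw_def by auto
    then show ?thesis using that by (simp add: \<sigma>_def f_inv_into_f)
  qed
  have img: "\<sigma> ` {x\<in>{2..n}. pos Sc x < m} = {y\<in>{2..n}. pos Sd y < m}" for m
  proof
    show "\<sigma> ` {x\<in>{2..n}. pos Sc x < m} \<subseteq> {y\<in>{2..n}. pos Sd y < m}"
      using key permutes_image[OF p2] by auto
    show "{y\<in>{2..n}. pos Sd y < m} \<subseteq> \<sigma> ` {x\<in>{2..n}. pos Sc x < m}"
    proof
      fix y assume y: "y \<in> {y\<in>{2..n}. pos Sd y < m}"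
      then obtain x where x: "x \<in> {2..n}" "y = \<sigma> x" using permutes_image[OF p2] by (metis (no_types, lifting) imageE mem_Collect_eq)
      then have "pos Sc x < m" using key y by auto
      then show "y \<in> \<sigma> ` {x\<in>{2..n}. pos Sc x < m}" using x by auto
    qed
  qed
  have imgB: "\<sigma> ` B = B'" if "B \<in> Sc" "B' \<in> Sd" "card B = card B'" for B B'
  proof -
    have "\<sigma> ` B = \<sigma> ` (insert 1 {x\<in>{2..n}. pos Sc x < card B - 1})"
      using flag_block[OF fc that(1)] by simp
    also have "\<dots> = insert 1 {y\<in>{2..n}. pos Sd y < card B' - 1}" using img s1 that(3) by simp
    also have "\<dots> = B'" using flag_block[OF fd that(2)] by simp
    finally show ?thesis .
  qed
  have "(\<lambda>B. \<sigma> ` B) ` Sc = Sd"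
  proof
    show "(\<lambda>B. \<sigma> ` B) ` Sc \<subseteq> Sd"
    proof
      fix C assume "C \<in> (\<lambda>B. \<sigma> ` B) ` Sc"
      then obtain B where B: "B \<in> Sc" "C = \<sigma> ` B" by auto
      have "card B \<in> {2..n-1}" using flag_cardB[OF fc B(1)] by simp
      then obtain B' where "B' \<in> Sd" "card B' = card B" using flag_exists[OF fd] by blast
      then show "C \<in> Sd" using imgB[OF B(1)] B(2) by simp
    qed
    show "Sd \<subseteq> (\<lambda>B. \<sigma> ` B) ` Sc"
    proof
      fix B' assume B': "B' \<in> Sd"
      have "card B' \<in> {2..n-1}" using flag_cardB[OF fd B'] by simp
      then obtain B where B: "B \<in> Sc" "card B = card B'" using flag_exists[OF fc] by blast
      then show "B' \<in> (\<lambda>B. \<sigma> ` B) ` Sc" using imgB[OF B(1) B'] by (metis imageI)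
    qed
  qed
  then show ?thesis using p s1 by blast
qed

lemma act_chain_flag:
  assumes p: "\<sigma> permutes {1..n}" and fl: "flag n S"
  shows "act_chain \<sigma> (part n ` S) = part n ` ((\<lambda>B. \<sigma> ` B) ` S)"
proof -
  have "act_part \<sigma> (part n B) = part n (\<sigma> ` B)" if "B \<in> S" for B
  proof -
    have "B \<subseteq> {1..n}" using fl that unfolding flag_def by simp
    then show ?thesis by (rule act_part_part[OF p])
  qed
  then have "(\<lambda>B. act_part \<sigma> (part n B)) ` S = (\<lambda>B. part n (\<sigma> ` B)) ` S"
    by (rule image_cong[OF refl])
  then show ?thesis unfolding act_chain_def image_image .
qed

lemma blk_part_image:
  assumes "\<forall>B\<in>S. 1 \<in> B"
  shows "blk ` part n ` S = S"
proof -
  have "(\<lambda>B. blk (part n B)) ` S = (\<lambda>B. B) ` S"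
    by (rule image_cong[OF refl]) (use assms blk_part in blast)
  then show ?thesis unfolding image_image by simp
qed

theorem lemma16:
  fixes n :: nat
  assumes "n \<ge> 3"
  shows "(\<forall>\<sigma>\<in>stab1 n. \<forall>c\<in>C_set n. act_chain \<sigma> c \<in> C_set n)
       \<and> (\<forall>c\<in>C_set n. \<forall>d\<in>C_set n. \<exists>\<sigma>\<in>stab1 n. act_chain \<sigma> c = d)
       \<and> (\<forall>\<sigma>\<in>stab1 n. \<forall>c\<in>C_set n. act_chain \<sigma> c = c \<longrightarrow> \<sigma> = id)"
proof (intro conjI ballI impI)
  fix \<sigma> c assume s: "\<sigma> \<in> stab1 n" and c: "c \<in> C_set n"
  have p: "\<sigma> permutes {1..n}" and s1: "\<sigma> 1 = 1" using s unfolding stab1_def by auto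
  obtain S where fl: "flag n S" and ceq: "c = part n ` S" using C_flag[OF assms c] by blast
  show "act_chain \<sigma> c \<in> C_set n"
    unfolding ceq act_chain_flag[OF p fl] by (rule flag_C[OF assms flag_image[OF p s1 fl]])
next
  fix c d assume c: "c \<in> C_set n" and d: "d \<in> C_set n"
  obtain Sc where fc: "flag n Sc" and ceq: "c = part n ` Sc" using C_flag[OF assms c] by blast
  obtain Sd where fd: "flag n Sd" and deq: "d = part n ` Sd" using C_flag[OF assms d] by blast
  obtain \<sigma> where p: "\<sigma> permutes {1..n}" and s1: "\<sigma> 1 = 1" and im: "(\<lambda>B. \<sigma> ` B) ` Sc = Sd"
    using trans_flag[OF assms fc fd] by blast
  have "act_chain \<sigma> c = d" unfolding ceq deq act_chain_flag[OF p fc] im ..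
  moreover have "\<sigma> \<in> stab1 n" using p s1 unfolding stab1_def by simp
  ultimately show "\<exists>\<sigma>\<in>stab1 n. act_chain \<sigma> c = d" by blast
next
  fix \<sigma> c assume s: "\<sigma> \<in> stab1 n" and c: "c \<in> C_set n" and fx: "act_chain \<sigma> c = c"
  have p: "\<sigma> permutes {1..n}" and s1: "\<sigma> 1 = 1" using s unfolding stab1_def by auto
  have inj: "inj \<sigma>" using p by (rule permutes_inj)
  obtain S where fl: "flag n S" and ceq: "c = part n ` S" using C_flag[OF assms c] by blast
  have S1: "\<forall>B\<in>S. 1 \<in> B" using fl unfolding flag_def by auto
  have T1: "\<forall>B\<in>(\<lambda>B. \<sigma> ` B) ` S. 1 \<in> B" using flag_image[OF p s1 fl] unfolding flag_def by auto
  have "part n ` ((\<lambda>B. \<sigma> ` B) ` S) = part n ` S" using fx unfolding ceq act_chain_flag[OF p fl] .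
  then have "blk ` part n ` ((\<lambda>B. \<sigma> ` B) ` S) = blk ` part n ` S" by simp
  then have TS: "(\<lambda>B. \<sigma> ` B) ` S = S" using blk_part_image[OF S1] blk_part_image[OF T1] by simp
  have fixB: "\<sigma> ` B = B" if B: "B \<in> S" for B
  proof -
    have "\<sigma> ` B \<in> S" using TS B by blast
    moreover have "card (\<sigma> ` B) = card B" using inj by (simp add: card_image inj_on_subset)
    ultimately show ?thesis using fl B unfolding flag_def by (metis inj_onD)
  qed
  have "\<sigma> i = i" if i: "i \<in> {2..n}" for i
  proof -
    have mem: "\<sigma> i \<in> B \<longleftrightarrow> i \<in> B" if "B \<in> S" for B
    proof -
      have "\<sigma> i \<in> B \<longleftrightarrow> \<sigma> i \<in> \<sigma> ` B" using fixB[OF that] by simp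
      also have "\<dots> \<longleftrightarrow> i \<in> B" using inj by (simp add: inj_image_mem_iff)
      finally show ?thesis .
    qed
    have "{B\<in>S. \<sigma> i \<notin> B} = {B\<in>S. i \<notin> B}" using mem by blast
    then have "pos S (\<sigma> i) = pos S i" unfolding pos_def by simp
    moreover have "\<sigma> i \<in> {2..n}"
    proof -
      have "\<sigma> i \<in> {1..n}" using i permutes_image[OF p] by auto
      moreover have "\<sigma> i \<noteq> 1"
      proof
        assume "\<sigma> i = 1"
        then have "\<sigma> i = \<sigma> 1" using s1 by simp
        then have "i = 1" using inj by (simp add: inj_eq)
        then show False using i by simp
      qed
      ultimately show ?thesis by auto
    qed
    moreover have n2: "n \<ge> 2" using assms by simp
    ultimately show "\<sigma> i = i" using inj_onD[OF flag_inj[OF fl n2]] i by blast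
  qed
  moreover have "\<sigma> i = i" if "i \<notin> {2..n}" for i
  proof (cases "i = 1")
    case True then show ?thesis using s1 by simp
  next
    case False then have "i \<notin> {1..n}" using that by auto
    then show ?thesis using permutes_not_in[OF p] by simp
  qed
  ultimately show "\<sigma> = id" by (intro ext) (metis id_apply)
qed


end
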